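(* Every GO-space is $C$-selective.
   Context: All spaces are assumed $T_1$. A GO-space (generalized ordered space) is a linearly ordered set with a topology finer than the order topology that has a base of order-convex sets (equivalently, a subspace of a linearly ordered topological space). For spaces $Y$, $X$, a map $\varphi:Y\to\mathcal P(X)\setminus\{\emptyset\}$ is lower semicontinuous (l.s.c.) if $\{y:\varphi(y)\cap U\neq\emptyset\}$ is open in $Y$ for every open $U\subseteq X$; a selection is a map $f:Y\to X$ with $f(y)\in\varphi(y)$ for all $y$. $X$ is $Y$-selective if every l.s.c. map from $Y$ to the family of nonempty closed subsets of $X$ has a continuous selection; $X$ is $C$-selective if it is $Y$-selective for every countable regular space $Y$. *)

theory Defs
  imports "HOL-Analysis.Analysis"
begin

definition linear_order_on_set :: "'a set \<Rightarrow> ('a \<Rightarrow> 'a \<Rightarrow> bool) \<Rightarrow> bool" where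
  "linear_order_on_set S le \<longleftrightarrow>
     (\<forall>x\<in>S. le x x) \<and>
     (\<forall>x\<in>S. \<forall>y\<in>S. le x y \<and> le y x \<longrightarrow> x = y) \<and>
     (\<forall>x\<in>S. \<forall>y\<in>S. \<forall>z\<in>S. le x y \<and> le y z \<longrightarrow> le x z) \<and>
     (\<forall>x\<in>S. \<forall>y\<in>S. le x y \<or> le y x)"

definition order_convex :: "'a set \<Rightarrow> ('a \<Rightarrow> 'a \<Rightarrow> bool) \<Rightarrow> 'a set \<Rightarrow> bool" where
  "order_convex S le V \<longleftrightarrow>
     (\<forall>a\<in>V. \<forall>c\<in>V. \<forall>b\<in>S. le a b \<and> le b c \<longrightarrow> b \<in> V)"

text \<open>GO-space: linearly ordered set whose topology is finer than the order topology
  (i.e. all open rays are open) and has a base of order-convex open sets.\<close>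
definition go_space :: "'a topology \<Rightarrow> ('a \<Rightarrow> 'a \<Rightarrow> bool) \<Rightarrow> bool" where
  "go_space X le \<longleftrightarrow>
     linear_order_on_set (topspace X) le \<and>
     (\<forall>a\<in>topspace X. openin X {x\<in>topspace X. le x a \<and> x \<noteq> a} \<and>
                       openin X {x\<in>topspace X. le a x \<and> x \<noteq> a}) \<and>
     (\<forall>U x. openin X U \<and> x \<in> U \<longrightarrow>
        (\<exists>V. openin X V \<and> order_convex (topspace X) le V \<and> x \<in> V \<and> V \<subseteq> U))"

definition lsc :: "'b topology \<Rightarrow> 'a topology \<Rightarrow> ('b \<Rightarrow> 'a set) \<Rightarrow> bool" where
  "lsc Y X \<phi> \<longleftrightarrow>
     (\<forall>U. openin X U \<longrightarrow> openin Y {y\<in>topspace Y. \<phi> y \<inter> U \<noteq> {}})"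

definition selective :: "'b topology \<Rightarrow> 'a topology \<Rightarrow> bool" where
  "selective Y X \<longleftrightarrow>
     (\<forall>\<phi>. (\<forall>y\<in>topspace Y. closedin X (\<phi> y) \<and> \<phi> y \<noteq> {}) \<and> lsc Y X \<phi> \<longrightarrow>
        (\<exists>f. continuous_map Y X f \<and> (\<forall>y\<in>topspace Y. f y \<in> \<phi> y)))"

end

theory Submission
  imports Defs
begin

lemma convexD:
  assumes "order_convex S le V" "a \<in> V" "c \<in> V" "b \<in> S" "le a b" "le b c"
  shows "b \<in> V"
proof -
  have H: "\<forall>a\<in>V. \<forall>c\<in>V. \<forall>b\<in>S. le a b \<and> le b c \<longrightarrow> b \<in> V"
    using assms(1) unfolding order_convex_def .
  show ?thesis by (rule H[rule_format, OF assms(2,3,4) conjI[OF assms(5,6)]])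
qed

lemma go_lin: "go_space X le \<Longrightarrow> linear_order_on_set (topspace X) le"
  by (simp add: go_space_def)

lemma go_linear:
  assumes "go_space X le"
  shows "\<And>x. x \<in> topspace X \<Longrightarrow> le x x"
    and "\<And>x y. x \<in> topspace X \<Longrightarrow> y \<in> topspace X \<Longrightarrow> le x y \<Longrightarrow> le y x \<Longrightarrow> x = y"
    and "\<And>x y z. x \<in> topspace X \<Longrightarrow> y \<in> topspace X \<Longrightarrow> z \<in> topspace X \<Longrightarrow> le x y \<Longrightarrow> le y z \<Longrightarrow> le x z"
    and "\<And>x y. x \<in> topspace X \<Longrightarrow> y \<in> topspace X \<Longrightarrow> le x y \<or> le y x"
  using go_lin[OF assms] unfolding linear_order_on_set_def by metis+

lemma go_rays:
  assumes "go_space X le" "a \<in> topspace X"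
  shows "openin X {x\<in>topspace X. le x a \<and> x \<noteq> a}" "openin X {x\<in>topspace X. le a x \<and> x \<noteq> a}"
  using assms unfolding go_space_def by simp_all

lemma go_convex_nbhd:
  assumes "go_space X le" "openin X U" "x \<in> U"
  obtains V where "openin X V" "order_convex (topspace X) le V" "x \<in> V" "V \<subseteq> U"
proof -
  have "\<forall>U x. openin X U \<and> x \<in> U \<longrightarrow>
        (\<exists>V. openin X V \<and> order_convex (topspace X) le V \<and> x \<in> V \<and> V \<subseteq> U)"
    using assms(1) by (simp add: go_space_def)
  then show ?thesis using assms(2,3) that by metis
qed

lemma go_dual:
  assumes "go_space X le"
  shows "go_space X (\<lambda>x y. le y x)"
proof -
  have oc: "order_convex (topspace X) (\<lambda>x y. le y x) V" if "order_convex (topspace X) le V" for V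
    unfolding order_convex_def
  proof (intro ballI impI)
    fix a c b assume abc: "a \<in> V" "c \<in> V" "b \<in> topspace X" "le b a \<and> le c b"
    show "b \<in> V" by (rule convexD[OF that abc(2) abc(1) abc(3)]) (use abc in simp_all)
  qed
  have l: "linear_order_on_set (topspace X) (\<lambda>x y. le y x)"
    unfolding linear_order_on_set_def
  proof (intro conjI ballI impI)
    fix x assume "x \<in> topspace X" then show "le x x" by (rule go_linear(1)[OF assms])
  next
    fix x y assume "x \<in> topspace X" "y \<in> topspace X" "le y x \<and> le x y"
    then show "x = y" using go_linear(2)[OF assms, of x y] by simp
  next
    fix x y z assume "x \<in> topspace X" "y \<in> topspace X" "z \<in> topspace X" "le y x \<and> le z y"
    then show "le z x" using go_linear(3)[OF assms, of z y x] by simp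
  next
    fix x y assume "x \<in> topspace X" "y \<in> topspace X"
    then show "le y x \<or> le x y" using go_linear(4)[OF assms, of x y] by fast
  qed
  have r: "\<forall>a\<in>topspace X. openin X {x\<in>topspace X. le a x \<and> x \<noteq> a} \<and>
                       openin X {x\<in>topspace X. le x a \<and> x \<noteq> a}"
    using go_rays[OF assms] by simp
  have b: "\<forall>U x. openin X U \<and> x \<in> U \<longrightarrow>
        (\<exists>V. openin X V \<and> order_convex (topspace X) (\<lambda>x y. le y x) V \<and> x \<in> V \<and> V \<subseteq> U)"
  proof (intro allI impI)
    fix U x assume "openin X U \<and> x \<in> U"
    then obtain V where "openin X V" "order_convex (topspace X) le V" "x \<in> V" "V \<subseteq> U"
      using go_convex_nbhd[OF assms] by metis
    then show "\<exists>V. openin X V \<and> order_convex (topspace X) (\<lambda>x y. le y x) V \<and> x \<in> V \<and> V \<subseteq> U"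
      using oc by metis
  qed
  show ?thesis unfolding go_space_def by (intro conjI l r b)
qed

lemma go_closed_interval:
  assumes go: "go_space X le" "a \<in> topspace X" "b \<in> topspace X"
  shows "closedin X {z\<in>topspace X. le a z \<and> le z b}"
proof -
  have "{z\<in>topspace X. le a z \<and> le z b} = topspace X - ({x\<in>topspace X. le x a \<and> x \<noteq> a} \<union> {x\<in>topspace X. le b x \<and> x \<noteq> b})"
    using go_linear[OF go(1)] assms(2,3) by blast
  moreover have "openin X ({x\<in>topspace X. le x a \<and> x \<noteq> a} \<union> {x\<in>topspace X. le b x \<and> x \<noteq> b})"
    using go_rays[OF go(1) assms(2)] go_rays[OF go(1) assms(3)] by blast
  ultimately show ?thesis using closedin_diff[OF closedin_topspace[of X]] by simp
qed

lemma left_side: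
  assumes go: "go_space X le" and x0: "x0 \<in> topspace X" and cF: "countable \<F>"
    and F: "\<forall>F\<in>\<F>. closedin X F \<and> x0 \<notin> F"
  shows "\<exists>G A K. (\<forall>k::nat. openin X (G k) \<and> x0 \<in> G k \<and> openin X (A k) \<and> closedin X (K k) \<and> A k \<subseteq> K k
      \<and> (\<forall>F\<in>\<F>. F \<inter> G k \<inter> {z. le z x0 \<and> z \<noteq> x0} \<subseteq> A k))
      \<and> (\<forall>U. openin X U \<and> x0 \<in> U \<longrightarrow> (\<exists>k. \<forall>m\<ge>k. K m \<subseteq> U))"
proof (cases "\<exists>P. openin X P \<and> x0 \<in> P \<and> (\<forall>F\<in>\<F>. F \<inter> P \<inter> {z. le z x0 \<and> z \<noteq> x0} = {})")
  case True
  then obtain P where P: "openin X P" "x0 \<in> P" "\<forall>F\<in>\<F>. F \<inter> P \<inter> {z. le z x0 \<and> z \<noteq> x0} = {}" by blast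
  show ?thesis
    apply (rule exI[of _ "\<lambda>k. P"], rule exI[of _ "\<lambda>k. {}"], rule exI[of _ "\<lambda>k. {}"])
    using P by auto
next
  case False
  note L = go_linear[OF go]
  let ?L = "{z. le z x0 \<and> z \<noteq> x0}"
  have ne: "\<F> \<noteq> {}" using False openin_topspace x0 by blast
  define c where "c = from_nat_into \<F>"
  have cr: "range c = \<F>" unfolding c_def by (rule range_from_nat_into[OF ne cF])
  have "\<exists>V. openin X V \<and> order_convex (topspace X) le V \<and> x0 \<in> V \<and> V \<subseteq> topspace X - c n" for n
  proof -
    have "closedin X (c n) \<and> x0 \<notin> c n" using F cr by blast
    then have "openin X (topspace X - c n)" "x0 \<in> topspace X - c n" using x0 by auto
    then show ?thesis using go_convex_nbhd[OF go] by metis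
  qed
  then obtain V where V: "\<And>n. openin X (V n) \<and> order_convex (topspace X) le (V n) \<and> x0 \<in> V n \<and> V n \<subseteq> topspace X - c n"
    by metis
  have bad: "\<exists>n. c n \<inter> P \<inter> ?L \<noteq> {}" if "openin X P" "x0 \<in> P" for P
    using False that cr by blast
  have Vne: "V n \<inter> ?L \<noteq> {}" for n
  proof
    assume "V n \<inter> ?L = {}"
    then show False using bad[of "V n"] V by blast
  qed
  have ex: "\<forall>n. \<exists>b. b \<in> V n \<and> le b x0 \<and> b \<noteq> x0" using Vne by blast
  from choice[OF ex] obtain b where b0: "\<forall>n. b n \<in> V n \<and> le (b n) x0 \<and> b n \<noteq> x0" ..
  have b: "b n \<in> V n \<and> le (b n) x0 \<and> b n \<noteq> x0" for n using b0 by simp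
  have bt: "b n \<in> topspace X" for n using b[of n] V[of n] by auto
  have key: "\<exists>n. \<forall>w\<in>topspace X. le (b n) w \<and> le w x0 \<longrightarrow> w \<in> U" if U: "openin X U" "x0 \<in> U" for U
  proof -
    obtain V2 where V2: "openin X V2" "order_convex (topspace X) le V2" "x0 \<in> V2" "V2 \<subseteq> U"
      using go_convex_nbhd[OF go U] by blast
    obtain n z where z: "z \<in> c n" "z \<in> V2" "le z x0" "z \<noteq> x0" using bad[OF V2(1,3)] by blast
    have zt: "z \<in> topspace X" using z V2 openin_subset by blast
    have "z \<notin> V n" using z V by blast
    have "\<not> le (b n) z"
    proof
      assume "le (b n) z"
      then have "z \<in> V n" using convexD[of "topspace X" le "V n" "b n" x0 z] V[of n] b[of n] z zt by blast
      then show False using \<open>z \<notin> V n\<close> by blast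
    qed
    then have zb: "le z (b n)" using L(4)[OF zt bt[of n]] by blast
    show ?thesis
    proof (intro exI ballI impI)
      fix w assume w: "w \<in> topspace X" "le (b n) w \<and> le w x0"
      then have "le z w" using L(3)[OF zt bt[of n] w(1)] zb by blast
      then have "w \<in> V2" using convexD[OF V2(2) z(2) V2(3) w(1)] w by blast
      then show "w \<in> U" using V2 by blast
    qed
  qed
  define a where "a = rec_nat (b 0) (\<lambda>k ak. if le ak (b (Suc k)) then b (Suc k) else ak)"
  have a0: "a 0 = b 0" and aS: "a (Suc k) = (if le (a k) (b (Suc k)) then b (Suc k) else a k)" for k
    unfolding a_def by simp_all
  have aprop: "a k \<in> topspace X \<and> le (a k) x0 \<and> a k \<noteq> x0 \<and> le (b k) (a k)" for k
  proof (induction k)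
    case 0 then show ?case using a0 b bt L(1) by simp
  next
    case (Suc k)
    show ?case
    proof (cases "le (a k) (b (Suc k))")
      case True then show ?thesis using aS b bt L(1) by simp
    next
      case False then show ?thesis using aS Suc L(4)[of "a k" "b (Suc k)"] bt by simp
    qed
  qed
  have amono: "le (a k) (a (k + j))" for k j
  proof (induction j)
    case 0 then show ?case using aprop L(1) by simp
  next
    case (Suc j)
    have "le (a (k+j)) (a (Suc (k+j)))" using aS[of "k+j"] aprop L(1) by simp
    then show ?case using L(3)[of "a k" "a (k+j)" "a (Suc (k+j))"] Suc aprop by simp
  qed
  define Gs where "Gs = (\<lambda>k. {z\<in>topspace X. le (a k) z \<and> z \<noteq> a k})"
  define As where "As = (\<lambda>k. {z\<in>topspace X. le (a k) z \<and> z \<noteq> a k} \<inter> {z\<in>topspace X. le z x0 \<and> z \<noteq> x0})"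
  define Ks where "Ks = (\<lambda>k. {z\<in>topspace X. le (a k) z \<and> le z x0})"
  have part1: "\<forall>k. openin X (Gs k) \<and> x0 \<in> Gs k \<and> openin X (As k) \<and> closedin X (Ks k) \<and> As k \<subseteq> Ks k
      \<and> (\<forall>F\<in>\<F>. F \<inter> Gs k \<inter> {z. le z x0 \<and> z \<noteq> x0} \<subseteq> As k)"
  proof (intro allI conjI)
    fix k
    show "openin X (Gs k)" unfolding Gs_def using go_rays[OF go] aprop by blast
    show "x0 \<in> Gs k" unfolding Gs_def using aprop[of k] x0 by auto
    show "openin X (As k)" unfolding As_def
      using go_rays[OF go] aprop x0 by blast
    show "closedin X (Ks k)" unfolding Ks_def using go_closed_interval[OF go] aprop x0 by blast
    show "As k \<subseteq> Ks k" unfolding As_def Ks_def by blast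
    show "\<forall>F\<in>\<F>. F \<inter> Gs k \<inter> ?L \<subseteq> As k" unfolding As_def Gs_def
      by blast
  qed
  have part2: "\<forall>U. openin X U \<and> x0 \<in> U \<longrightarrow> (\<exists>k. \<forall>m\<ge>k. Ks m \<subseteq> U)"
  proof (intro allI impI)
    fix U assume U: "openin X U \<and> x0 \<in> U"
    then obtain n where n: "\<forall>w\<in>topspace X. le (b n) w \<and> le w x0 \<longrightarrow> w \<in> U" using key by blast
    show "\<exists>k. \<forall>m\<ge>k. Ks m \<subseteq> U"
    proof (rule exI[of _ n], intro allI impI subsetI)
      fix m z assume m: "n \<le> m" and z: "z \<in> Ks m"
      have "le (a n) (a m)" using amono[of n "m - n"] m by simp
      then have "le (b n) (a m)" using L(3)[of "b n" "a n" "a m"] aprop bt by blast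
      then have "le (b n) z" using L(3)[of "b n" "a m" z] aprop bt z unfolding Ks_def by blast
      then show "z \<in> U" using n z unfolding Ks_def by blast
    qed
  qed
  show ?thesis
    apply (intro exI conjI)
     apply (rule part1)
    by (rule part2)
qed


lemma point_lemma:
  assumes go: "go_space X le" and x0: "x0 \<in> topspace X" and cF: "countable \<F>"
    and F: "\<forall>F\<in>\<F>. closedin X F \<and> x0 \<notin> F"
  shows "\<exists>G A K. (\<forall>k::nat. openin X (G k) \<and> x0 \<in> G k \<and> openin X (A k) \<and> closedin X (K k) \<and> A k \<subseteq> K k
      \<and> (\<forall>F\<in>\<F>. F \<inter> G k \<subseteq> A k))
      \<and> (\<forall>U. openin X U \<and> x0 \<in> U \<longrightarrow> (\<exists>k. \<forall>m\<ge>k. K m \<subseteq> U))"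
proof -
  obtain G1 A1 K1 where h1: "\<forall>k::nat. openin X (G1 k) \<and> x0 \<in> G1 k \<and> openin X (A1 k) \<and> closedin X (K1 k) \<and> A1 k \<subseteq> K1 k
      \<and> (\<forall>F\<in>\<F>. F \<inter> G1 k \<inter> {z. le z x0 \<and> z \<noteq> x0} \<subseteq> A1 k)"
    and h1u: "\<forall>U. openin X U \<and> x0 \<in> U \<longrightarrow> (\<exists>k. \<forall>m\<ge>k. K1 m \<subseteq> U)"
    using left_side[OF go x0 cF F] by (elim exE conjE) (rule that; assumption)
  obtain G2 A2 K2 where h2: "\<forall>k::nat. openin X (G2 k) \<and> x0 \<in> G2 k \<and> openin X (A2 k) \<and> closedin X (K2 k) \<and> A2 k \<subseteq> K2 k
      \<and> (\<forall>F\<in>\<F>. F \<inter> G2 k \<inter> {z. le x0 z \<and> z \<noteq> x0} \<subseteq> A2 k)"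
    and h2u: "\<forall>U. openin X U \<and> x0 \<in> U \<longrightarrow> (\<exists>k. \<forall>m\<ge>k. K2 m \<subseteq> U)"
    using left_side[OF go_dual[OF go] x0 cF F] by (elim exE conjE) (rule that; assumption)
  define Gs where "Gs = (\<lambda>k. G1 k \<inter> G2 k)"
  define As where "As = (\<lambda>k. A1 k \<union> A2 k)"
  define Ks where "Ks = (\<lambda>k. K1 k \<union> K2 k)"
  have part1: "\<forall>k::nat. openin X (Gs k) \<and> x0 \<in> Gs k \<and> openin X (As k) \<and> closedin X (Ks k) \<and> As k \<subseteq> Ks k
      \<and> (\<forall>F\<in>\<F>. F \<inter> Gs k \<subseteq> As k)"
  proof (intro allI conjI ballI)
    fix k :: nat
    show "openin X (Gs k)" unfolding Gs_def using h1 h2 by (simp add: openin_Int)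
    show "x0 \<in> Gs k" unfolding Gs_def using h1 h2 by simp
    show "openin X (As k)" unfolding As_def using h1 h2 by (simp add: openin_Un)
    show "closedin X (Ks k)" unfolding Ks_def using h1 h2 by (simp add: closedin_Un)
    show "As k \<subseteq> Ks k" unfolding As_def Ks_def using h1 h2 by blast
    fix F assume FF: "F \<in> \<F>"
    show "F \<inter> Gs k \<subseteq> As k"
    proof
    fix z assume z: "z \<in> F \<inter> Gs k"
    have zt: "z \<in> topspace X" using F FF z closedin_subset by blast
    have zx: "z \<noteq> x0" using F FF z by blast
    have "le z x0 \<or> le x0 z" using go_linear(4)[OF go zt x0] .
    then show "z \<in> As k"
    proof
      assume "le z x0"
      then have "z \<in> F \<inter> G1 k \<inter> {z. le z x0 \<and> z \<noteq> x0}" using z zx unfolding Gs_def by blast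
      then show ?thesis using h1 FF unfolding As_def by blast
    next
      assume "le x0 z"
      then have "z \<in> F \<inter> G2 k \<inter> {z. le x0 z \<and> z \<noteq> x0}" using z zx unfolding Gs_def by blast
      then show ?thesis using h2 FF unfolding As_def by blast
    qed
    qed
  qed
  have part2: "\<forall>U. openin X U \<and> x0 \<in> U \<longrightarrow> (\<exists>k. \<forall>m\<ge>k. Ks m \<subseteq> U)"
  proof (intro allI impI)
    fix U assume U: "openin X U \<and> x0 \<in> U"
    obtain k1 where k1: "\<forall>m\<ge>k1. K1 m \<subseteq> U" using h1u U by blast
    obtain k2 where k2: "\<forall>m\<ge>k2. K2 m \<subseteq> U" using h2u U by blast
    show "\<exists>k. \<forall>m\<ge>k. Ks m \<subseteq> U"
      by (rule exI[of _ "max k1 k2"]) (use k1 k2 in \<open>simp add: Ks_def\<close>)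
  qed
  show ?thesis
    apply (intro exI conjI)
     apply (rule part1)
    by (rule part2)
qed

lemma countable_clopen_nbhd:
  assumes cY: "countable (topspace Y)" and rY: "regular_space Y" and t1: "t1_space Y"
    and W: "openin Y W" "y0 \<in> W"
  shows "\<exists>Z. openin Y Z \<and> closedin Y Z \<and> y0 \<in> Z \<and> Z \<subseteq> W"
proof -
  have nY: "normal_space Y"
    using cY rY countable_imp_Lindelof_space regular_Lindelof_imp_normal_space by blast
  have y0: "y0 \<in> topspace Y" using W(1) W(2) openin_subset by auto
  have c1: "closedin Y {y0}" by (rule closedin_t1_singleton[OF t1 y0])
  have c2: "closedin Y (topspace Y - W)" using W by blast
  obtain f where f: "continuous_map Y (top_of_set {0..1::real}) f" "f ` {y0} \<subseteq> {0}" "f ` (topspace Y - W) \<subseteq> {1}"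
    using Urysohn_lemma[OF nY c1 c2, of 0 1] W by (auto simp: disjnt_def)
  have "countable (f ` topspace Y)" using cY by blast
  moreover have "uncountable {0<..<1::real}" by (simp add: uncountable_open_interval)
  ultimately obtain r where r: "r \<in> {0<..<1::real}" "r \<notin> f ` topspace Y"
    by (metis countable_subset subsetI)
  have fc: "continuous_map Y euclideanreal f"
    using f(1) continuous_map_in_subtopology by blast
  define Z where "Z = {y \<in> topspace Y. f y \<in> {..<r}}"
  have Z2: "Z = {y \<in> topspace Y. f y \<in> {..r}}"
    using r unfolding Z_def by force
  have "openin Y Z" unfolding Z_def
    by (rule openin_continuous_map_preimage[OF fc]) simp
  moreover have "closedin Y Z" unfolding Z2
    by (rule closedin_continuous_map_preimage[OF fc]) simp
  moreover have "y0 \<in> Z" using f(2) r y0 unfolding Z_def by auto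
  moreover have "Z \<subseteq> W" using f(3) r unfolding Z_def by force
  ultimately show ?thesis by blast
qed


lemma clopen_sequence:
  assumes cY: "countable (topspace Y)" and rY: "regular_space Y" and t1: "t1_space Y"
    and y0: "y0 \<in> topspace Y" and W: "\<forall>k. openin Y (W k) \<and> y0 \<in> W k"
  shows "\<exists>Z. Z 0 = topspace Y \<and> (\<forall>k::nat. openin Y (Z k) \<and> closedin Y (Z k) \<and> y0 \<in> Z k \<and> Z (Suc k) \<subseteq> Z k \<inter> W (Suc k))
     \<and> (\<forall>y\<in>topspace Y. y \<noteq> y0 \<longrightarrow> (\<exists>k. y \<notin> Z k))"
proof -
  define e where "e = from_nat_into (topspace Y)"
  have ne: "topspace Y \<noteq> {}" using y0 by blast
  have er: "range e = topspace Y" unfolding e_def by (rule range_from_nat_into[OF ne cY])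
  define N where "N = (\<lambda>k Zk. Zk \<inter> W (Suc k) \<inter> (topspace Y - ({e k} - {y0})))"
  define Q where "Q = (\<lambda>k Zk Z'. openin Y Z' \<and> closedin Y Z' \<and> y0 \<in> Z' \<and> Z' \<subseteq> N k Zk)"
  define Z where "Z = rec_nat (topspace Y) (\<lambda>k Zk. SOME Z'. Q k Zk Z')"
  have Z0: "Z 0 = topspace Y" unfolding Z_def by simp
  have ZS: "Z (Suc k) = (SOME Z'. Q k (Z k) Z')" for k unfolding Z_def by simp
  have step: "\<exists>Z'. Q k Zk Z'" if "openin Y Zk" "y0 \<in> Zk" for k Zk
  proof -
    have ek: "e k \<in> topspace Y" using er by blast
    have o1: "openin Y (topspace Y - ({e k} - {y0}))"
    proof (cases "e k = y0")
      case True then show ?thesis by simp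
    next
      case False
      then have "topspace Y - ({e k} - {y0}) = topspace Y - {e k}" by blast
      then show ?thesis using closedin_t1_singleton[OF t1 ek] by (simp add: openin_diff)
    qed
    have "openin Y (N k Zk)" unfolding N_def using that(1) W o1 by (simp add: openin_Int)
    moreover have "y0 \<in> N k Zk" unfolding N_def using that(2) W y0 by simp
    ultimately show ?thesis unfolding Q_def using countable_clopen_nbhd[OF cY rY t1] by blast
  qed
  have inv: "openin Y (Z k) \<and> closedin Y (Z k) \<and> y0 \<in> Z k" for k
  proof (induction k)
    case 0 then show ?case using Z0 y0 by simp
  next
    case (Suc k)
    have "Q k (Z k) (Z (Suc k))" unfolding ZS by (rule someI_ex[OF step]) (use Suc in simp_all)
    then show ?case unfolding Q_def by simp
  qed
  have QS: "Q k (Z k) (Z (Suc k))" for k unfolding ZS by (rule someI_ex[OF step]) (use inv in simp_all)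
  show ?thesis
  proof (rule exI[of _ Z], intro conjI allI ballI impI)
    show "Z 0 = topspace Y" by (rule Z0)
    fix k
    show "openin Y (Z k)" "closedin Y (Z k)" "y0 \<in> Z k" using inv by simp_all
    show "Z (Suc k) \<subseteq> Z k \<inter> W (Suc k)" using QS[of k] unfolding Q_def N_def by blast
  next
    fix y assume y: "y \<in> topspace Y" "y \<noteq> y0"
    then obtain n where n: "y = e n" using er by blast
    have "y \<notin> Z (Suc n)" using QS[of n] y n unfolding Q_def N_def by blast
    then show "\<exists>k. y \<notin> Z k" by blast
  qed
qed


lemma go_closed_singleton:
  assumes go: "go_space X le" and x0: "x0 \<in> topspace X"
  shows "closedin X {x0}"
proof -
  have "{z\<in>topspace X. le x0 z \<and> le z x0} = {x0}"
    using go_linear(1,2)[OF go] x0 by blast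
  then show ?thesis using go_closed_interval[OF go x0 x0] by simp
qed

lemma modify:
  assumes go: "go_space X le" and cY: "countable (topspace Y)" and rY: "regular_space Y" and t1: "t1_space Y"
    and psi: "\<forall>y\<in>topspace Y. closedin X (\<psi> y) \<and> \<psi> y \<noteq> {}" and lsc: "lsc Y X \<psi>"
    and y0: "y0 \<in> topspace Y" and x0: "x0 \<in> \<psi> y0"
  shows "\<exists>\<psi>'. (\<forall>y\<in>topspace Y. closedin X (\<psi>' y) \<and> \<psi>' y \<noteq> {} \<and> \<psi>' y \<subseteq> \<psi> y) \<and> lsc Y X \<psi>'
     \<and> \<psi>' y0 = {x0}
     \<and> (\<forall>U. openin X U \<and> x0 \<in> U \<longrightarrow> (\<exists>T. openin Y T \<and> y0 \<in> T \<and> (\<forall>y\<in>T. \<psi>' y \<subseteq> U)))"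
proof -
  have x0t: "x0 \<in> topspace X" using psi y0 x0 closedin_subset by blast
  have lscD: "openin Y {y\<in>topspace Y. \<psi> y \<inter> U \<noteq> {}}" if "openin X U" for U
    using lsc that unfolding lsc_def by blast
  define C where "C = {y\<in>topspace Y. x0 \<notin> \<psi> y}"
  define \<F> where "\<F> = \<psi> ` C"
  have cF: "countable \<F>" unfolding \<F>_def C_def using cY by (simp add: countable_subset[of _ "topspace Y"])
  have FF: "\<forall>F\<in>\<F>. closedin X F \<and> x0 \<notin> F" unfolding \<F>_def C_def using psi by blast
  obtain G A K where GAK: "\<forall>k::nat. openin X (G k) \<and> x0 \<in> G k \<and> openin X (A k) \<and> closedin X (K k) \<and> A k \<subseteq> K k
      \<and> (\<forall>F\<in>\<F>. F \<inter> G k \<subseteq> A k)"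
    and GAKu: "\<forall>U. openin X U \<and> x0 \<in> U \<longrightarrow> (\<exists>k. \<forall>m\<ge>k. K m \<subseteq> U)"
    using point_lemma[OF go x0t cF FF] by (elim exE conjE) (rule that; assumption)
  have CA: "\<psi> y \<inter> G k \<subseteq> A k" if "y \<in> topspace Y" "x0 \<notin> \<psi> y" for y k
    using GAK that unfolding \<F>_def C_def by blast
  define W where "W = (\<lambda>k. {y\<in>topspace Y. \<psi> y \<inter> G k \<noteq> {}})"
  have Wk: "\<forall>k. openin Y (W k) \<and> y0 \<in> W k"
    unfolding W_def using lscD GAK x0 y0 by blast
  obtain Z where Z0: "Z 0 = topspace Y"
    and Zk: "\<forall>k::nat. openin Y (Z k) \<and> closedin Y (Z k) \<and> y0 \<in> Z k \<and> Z (Suc k) \<subseteq> Z k \<inter> W (Suc k)"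
    and Zsep: "\<forall>y\<in>topspace Y. y \<noteq> y0 \<longrightarrow> (\<exists>k. y \<notin> Z k)"
    using clopen_sequence[OF cY rY t1 y0 Wk] by (elim exE conjE) (rule that; assumption)
  have Zmono: "Z (j + i) \<subseteq> Z j" for i j
  proof (induction i)
    case 0 then show ?case by simp
  next
    case (Suc i) then show ?case using Zk[rule_format, of "j+i"] by auto
  qed
  have Zmono': "Z k \<subseteq> Z j" if "j \<le> k" for j k
    using Zmono[of j "k - j"] that by simp
  have Ztop: "Z k \<subseteq> topspace Y" for k using Zk openin_subset by blast
  have ZW: "Z k \<subseteq> W k" if k1: "k \<ge> 1" for k
  proof -
    obtain j where "k = Suc j" using k1 by (cases k) auto
    then show ?thesis using Zk by blast
  qed
  define m where "m = (\<lambda>y. LEAST k. y \<notin> Z (Suc k))"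
  have mex: "\<exists>k. y \<notin> Z (Suc k)" if yy: "y \<in> topspace Y" "y \<noteq> y0" for y
  proof -
    obtain k where "y \<notin> Z k" using Zsep yy by blast
    then have "y \<notin> Z (Suc k)" using Zmono'[of k "Suc k"] by auto
    then show ?thesis by blast
  qed
  have m1: "y \<notin> Z (Suc (m y))" if "y \<in> topspace Y" "y \<noteq> y0" for y
    unfolding m_def using LeastI_ex[OF mex[OF that]] .
  have m2: "y \<in> Z (m y)" if "y \<in> topspace Y" "y \<noteq> y0" for y
  proof (cases "m y")
    case 0 then show ?thesis using Z0 that by simp
  next
    case (Suc j)
    have "j < m y" using Suc by simp
    then have "\<not> (y \<notin> Z (Suc j))" unfolding m_def by (rule not_less_Least)
    then show ?thesis using Suc by simp
  qed
  have m3: "j \<le> m y" if "y \<in> topspace Y" "y \<noteq> y0" "y \<in> Z j" for y j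
  proof (rule ccontr)
    assume "\<not> j \<le> m y"
    then have "Z j \<subseteq> Z (Suc (m y))" using Zmono' by simp
    then show False using m1[OF that(1,2)] that(3) by blast
  qed
  have m4: "m y \<le> k" if "y \<notin> Z (Suc k)" for y k
    unfolding m_def using that by (rule Least_le)
  define \<psi>' where "\<psi>' = (\<lambda>y. if y = y0 then {x0} else if m y = 0 then \<psi> y
      else X closure_of (\<psi> y \<inter> A (m y)) \<union> (\<psi> y \<inter> {x0}))"
  have closed_x0: "closedin X {x0}" by (rule go_closed_singleton[OF go x0t])
  have P1: "closedin X (\<psi>' y) \<and> \<psi>' y \<noteq> {} \<and> \<psi>' y \<subseteq> \<psi> y" if y: "y \<in> topspace Y" for y
  proof (cases "y = y0")
    case True then show ?thesis unfolding \<psi>'_def using closed_x0 x0 by simp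
  next
    case False
    show ?thesis
    proof (cases "m y = 0")
      case True then show ?thesis unfolding \<psi>'_def using False psi y by simp
    next
      case m0: False
      let ?k = "m y"
      have e: "\<psi>' y = X closure_of (\<psi> y \<inter> A ?k) \<union> (\<psi> y \<inter> {x0})" unfolding \<psi>'_def using False m0 by simp
      have cl: "closedin X (\<psi> y)" using psi y by blast
      have "closedin X (\<psi>' y)" unfolding e using cl closed_x0 by (simp add: closedin_Un closedin_Int)
      moreover have "\<psi>' y \<subseteq> \<psi> y" unfolding e using closure_of_minimal[OF _ cl, of "\<psi> y \<inter> A ?k"] by blast
      moreover have "\<psi>' y \<noteq> {}"
      proof (cases "x0 \<in> \<psi> y")
        case True then show ?thesis unfolding e by blast
      next
        case nx: False
        have "y \<in> W ?k" using ZW[of ?k] m0 m2[OF y False] by auto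
        then have "\<psi> y \<inter> G ?k \<noteq> {}" unfolding W_def by blast
        then have "\<psi> y \<inter> A ?k \<noteq> {}" using CA[OF y nx, of ?k] by blast
        moreover have "\<psi> y \<inter> A ?k \<subseteq> X closure_of (\<psi> y \<inter> A ?k)"
          using closure_of_subset[of "\<psi> y \<inter> A ?k" X] cl closedin_subset by blast
        ultimately show ?thesis unfolding e by blast
      qed
      ultimately show ?thesis by blast
    qed
  qed
  have P2: "\<exists>T. openin Y T \<and> y0 \<in> T \<and> (\<forall>y\<in>T. \<psi>' y \<subseteq> U)" if U: "openin X U" "x0 \<in> U" for U
  proof -
    obtain k where k: "\<forall>m\<ge>k. K m \<subseteq> U" using GAKu U by blast
    define T where "T = Z (max k 1)"
    have "\<psi>' y \<subseteq> U" if yT: "y \<in> T" for y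
    proof (cases "y = y0")
      case True then show ?thesis unfolding \<psi>'_def using U by simp
    next
      case False
      have yt: "y \<in> topspace Y" using yT Ztop unfolding T_def by blast
      have mk: "max k 1 \<le> m y" using m3[OF yt False] yT unfolding T_def by blast
      then have e: "\<psi>' y = X closure_of (\<psi> y \<inter> A (m y)) \<union> (\<psi> y \<inter> {x0})" unfolding \<psi>'_def using False by simp
      have "K (m y) \<subseteq> U" using k mk by simp
      moreover have "X closure_of (\<psi> y \<inter> A (m y)) \<subseteq> K (m y)"
        using closure_of_minimal[of "\<psi> y \<inter> A (m y)" "K (m y)" X] GAK by blast
      ultimately show ?thesis unfolding e using U by blast
    qed
    moreover have "openin Y T" "y0 \<in> T" unfolding T_def using Zk by simp_all
    ultimately show ?thesis by blast
  qed
  have P3: "lsc Y X \<psi>'"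
    unfolding lsc_def
  proof (intro allI impI)
    fix U assume U: "openin X U"
    show "openin Y {y\<in>topspace Y. \<psi>' y \<inter> U \<noteq> {}}"
    proof (subst openin_subopen, intro ballI)
      fix y1 assume y1S: "y1 \<in> {y\<in>topspace Y. \<psi>' y \<inter> U \<noteq> {}}"
      then have y1: "y1 \<in> topspace Y" "\<psi>' y1 \<inter> U \<noteq> {}" by auto
      show "\<exists>T. openin Y T \<and> y1 \<in> T \<and> T \<subseteq> {y\<in>topspace Y. \<psi>' y \<inter> U \<noteq> {}}"
      proof (cases "y1 = y0")
        case True
        then have "x0 \<in> U" using y1 unfolding \<psi>'_def by simp
        then obtain T where T: "openin Y T" "y0 \<in> T" "\<forall>y\<in>T. \<psi>' y \<subseteq> U" using P2 U by blast
        have "T \<subseteq> {y\<in>topspace Y. \<psi>' y \<inter> U \<noteq> {}}"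
        proof
          fix y assume yT: "y \<in> T"
          have yt: "y \<in> topspace Y" using T(1) yT openin_subset by blast
          then have "\<psi>' y \<noteq> {}" using P1 by blast
          then show "y \<in> {y\<in>topspace Y. \<psi>' y \<inter> U \<noteq> {}}" using T(3) yT yt by blast
        qed
        then show ?thesis using T True by blast
      next
        case ny1: False
        show ?thesis
        proof (cases "m y1 = 0")
          case True
          define T where "T = (topspace Y - Z 1) \<inter> {y\<in>topspace Y. \<psi> y \<inter> U \<noteq> {}}"
          have "openin Y T" unfolding T_def using Zk lscD[OF U] by (simp add: openin_diff openin_Int)
          moreover have "y1 \<in> T"
            using m1[OF y1(1) ny1] True y1 ny1 unfolding T_def \<psi>'_def by simp
          moreover have "T \<subseteq> {y\<in>topspace Y. \<psi>' y \<inter> U \<noteq> {}}"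
          proof
            fix y assume yT: "y \<in> T"
            have ny: "y \<noteq> y0" using yT Zk unfolding T_def by auto
            have "m y = 0" using m4[of y 0] yT unfolding T_def by simp
            then show "y \<in> {y\<in>topspace Y. \<psi>' y \<inter> U \<noteq> {}}" using yT ny unfolding T_def \<psi>'_def by simp
          qed
          ultimately show ?thesis by blast
        next
          case m0: False
          let ?k = "m y1"
          define P where "P = Z ?k - Z (Suc ?k)"
          have Po: "openin Y P" unfolding P_def using Zk by (simp add: openin_diff)
          have y1P: "y1 \<in> P" unfolding P_def using m1[OF y1(1) ny1] m2[OF y1(1) ny1] by simp
          have Pm: "y \<noteq> y0 \<and> m y = ?k \<and> y \<in> topspace Y" if "y \<in> P" for y
          proof -
            have ny: "y \<noteq> y0" using that Zk unfolding P_def by auto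
            have yt: "y \<in> topspace Y" using that Ztop unfolding P_def by auto
            have "?k \<le> m y" using m3[OF yt ny] that unfolding P_def by simp
            moreover have "m y \<le> ?k" using m4 that unfolding P_def by simp
            ultimately show ?thesis using ny yt by simp
          qed
          have e: "\<psi>' y = X closure_of (\<psi> y \<inter> A ?k) \<union> (\<psi> y \<inter> {x0})" if "y \<in> P" for y
            using Pm[OF that] m0 unfolding \<psi>'_def by simp
          have sub: "\<psi> y \<inter> A ?k \<subseteq> \<psi>' y" if "y \<in> P" for y
          proof -
            have "\<psi> y \<inter> A ?k \<subseteq> topspace X" using psi Pm[OF that] closedin_subset by blast
            then show ?thesis unfolding e[OF that] using closure_of_subset by blast
          qed
          have "X closure_of (\<psi> y1 \<inter> A ?k) \<inter> U \<noteq> {} \<or> x0 \<in> \<psi> y1 \<inter> U"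
            using y1(2) unfolding e[OF y1P] by blast
          then show ?thesis
          proof
            assume "X closure_of (\<psi> y1 \<inter> A ?k) \<inter> U \<noteq> {}"
            then have "U \<inter> (\<psi> y1 \<inter> A ?k) \<noteq> {}"
              using openin_Int_closure_of_eq_empty[OF U, of "\<psi> y1 \<inter> A ?k"] by blast
            define T where "T = P \<inter> {y\<in>topspace Y. \<psi> y \<inter> (A ?k \<inter> U) \<noteq> {}}"
            have "openin Y T" unfolding T_def using Po lscD[of "A ?k \<inter> U"] GAK U by (simp add: openin_Int)
            moreover have "y1 \<in> T" unfolding T_def using y1P y1 \<open>U \<inter> (\<psi> y1 \<inter> A ?k) \<noteq> {}\<close> by blast
            moreover have "T \<subseteq> {y\<in>topspace Y. \<psi>' y \<inter> U \<noteq> {}}"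
            proof
              fix y assume yT: "y \<in> T"
              then have "y \<in> P" unfolding T_def by blast
              then show "y \<in> {y\<in>topspace Y. \<psi>' y \<inter> U \<noteq> {}}" using sub[of y] Pm[of y] yT unfolding T_def by blast
            qed
            ultimately show ?thesis by blast
          next
            assume x0U: "x0 \<in> \<psi> y1 \<inter> U"
            define T where "T = P \<inter> {y\<in>topspace Y. \<psi> y \<inter> (U \<inter> G ?k) \<noteq> {}}"
            have "openin Y T" unfolding T_def using Po lscD[of "U \<inter> G ?k"] GAK U by (simp add: openin_Int)
            moreover have "y1 \<in> T" unfolding T_def using y1P y1 x0U GAK by blast
            moreover have "T \<subseteq> {y\<in>topspace Y. \<psi>' y \<inter> U \<noteq> {}}"
            proof
              fix y assume yT: "y \<in> T"
              then have yP: "y \<in> P" unfolding T_def by blast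
              show "y \<in> {y\<in>topspace Y. \<psi>' y \<inter> U \<noteq> {}}"
              proof (cases "x0 \<in> \<psi> y")
                case True
                then have "x0 \<in> \<psi>' y" unfolding e[OF yP] by blast
                then show ?thesis using Pm[OF yP] x0U by blast
              next
                case False
                have "\<psi> y \<inter> G ?k \<subseteq> A ?k" using CA[of y ?k] Pm[OF yP] False by blast
                then have "\<psi> y \<inter> A ?k \<inter> U \<noteq> {}" using yT unfolding T_def by blast
                then show ?thesis using sub[OF yP] Pm[OF yP] by blast
              qed
            qed
            ultimately show ?thesis by blast
          qed
        qed
      qed
    qed
  qed
  have P4: "\<psi>' y0 = {x0}" unfolding \<psi>'_def by simp
  show ?thesis
    apply (rule exI[of _ \<psi>'])
    using P1 P2 P3 P4 by blast
qed


theorem mainTheorem2: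
  fixes X :: "'a topology" and le :: "'a \<Rightarrow> 'a \<Rightarrow> bool" and Y :: "'b topology"
  assumes "go_space X le"
    and "countable (topspace Y)" and "regular_space Y" and "t1_space Y"
  shows "selective Y X"
  unfolding selective_def
proof (intro allI impI)
  note go = assms(1) and cY = assms(2) and rY = assms(3) and t1 = assms(4)
  fix \<phi> :: "'b \<Rightarrow> 'a set"
  assume a: "(\<forall>y\<in>topspace Y. closedin X (\<phi> y) \<and> \<phi> y \<noteq> {}) \<and> lsc Y X \<phi>"
  show "\<exists>f. continuous_map Y X f \<and> (\<forall>y\<in>topspace Y. f y \<in> \<phi> y)"
  proof (cases "topspace Y = {}")
    case True
    have "continuous_map Y X (\<lambda>y. undefined)" unfolding continuous_map_def using True by simp
    then show ?thesis using True by blast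
  next
    case ne: False
    define e where "e = from_nat_into (topspace Y)"
    have er: "range e = topspace Y" unfolding e_def by (rule range_from_nat_into[OF ne cY])
    have et: "e n \<in> topspace Y" for n using er by blast
    define Inv where "Inv = (\<lambda>\<psi>. (\<forall>y\<in>topspace Y. closedin X (\<psi> y) \<and> \<psi> y \<noteq> {}) \<and> lsc Y X \<psi>)"
    define R where "R = (\<lambda>n \<psi> \<psi>'. (\<forall>y\<in>topspace Y. closedin X (\<psi>' y) \<and> \<psi>' y \<noteq> {} \<and> \<psi>' y \<subseteq> \<psi> y) \<and> lsc Y X \<psi>'
     \<and> \<psi>' (e n) = {SOME x. x \<in> \<psi> (e n)}
     \<and> (\<forall>U. openin X U \<and> (SOME x. x \<in> \<psi> (e n)) \<in> U \<longrightarrow> (\<exists>T. openin Y T \<and> e n \<in> T \<and> (\<forall>y\<in>T. \<psi>' y \<subseteq> U))))"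
    have step: "\<exists>\<psi>'. R n \<psi> \<psi>'" if "Inv \<psi>" for n \<psi>
    proof -
      have ps: "\<forall>y\<in>topspace Y. closedin X (\<psi> y) \<and> \<psi> y \<noteq> {}" and ls: "lsc Y X \<psi>"
        using that unfolding Inv_def by simp_all
      have "\<psi> (e n) \<noteq> {}" using ps et by blast
      then have "(SOME x. x \<in> \<psi> (e n)) \<in> \<psi> (e n)" by (simp add: some_in_eq)
      from modify[OF go cY rY t1 ps ls et this] show ?thesis unfolding R_def .
    qed
    define \<Phi> where "\<Phi> = rec_nat \<phi> (\<lambda>n \<psi>. SOME \<psi>'. R n \<psi> \<psi>')"
    have \<Phi>0: "\<Phi> 0 = \<phi>" unfolding \<Phi>_def by simp
    have \<Phi>S: "\<Phi> (Suc n) = (SOME \<psi>'. R n (\<Phi> n) \<psi>')" for n unfolding \<Phi>_def by simp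
    have inv: "Inv (\<Phi> n)" for n
    proof (induction n)
      case 0 then show ?case using a \<Phi>0 unfolding Inv_def by simp
    next
      case (Suc n)
      have "R n (\<Phi> n) (\<Phi> (Suc n))" unfolding \<Phi>S by (rule someI_ex[OF step[OF Suc]])
      then show ?case unfolding R_def Inv_def by blast
    qed
    have RS: "R n (\<Phi> n) (\<Phi> (Suc n))" for n unfolding \<Phi>S by (rule someI_ex[OF step[OF inv]])
    define x where "x = (\<lambda>n. SOME x. x \<in> \<Phi> n (e n))"
    have Phi_e: "\<Phi> (Suc n) (e n) = {x n}" for n using RS[of n] unfolding R_def x_def by blast
    have Phi_usc: "\<exists>T. openin Y T \<and> e n \<in> T \<and> (\<forall>y\<in>T. \<Phi> (Suc n) y \<subseteq> U)" if "openin X U" "x n \<in> U" for n U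
      using RS[of n] that unfolding R_def x_def by blast
    have Phi_sub: "\<Phi> (Suc n) y \<subseteq> \<Phi> n y" if "y \<in> topspace Y" for n y
      using RS[of n] that unfolding R_def by blast
    have Phi_ne: "\<Phi> n y \<noteq> {}" if "y \<in> topspace Y" for n y
      using inv[of n] that unfolding Inv_def by blast
    have Phi_mono0: "\<Phi> (j + i) y \<subseteq> \<Phi> j y" if "y \<in> topspace Y" for i j y
    proof (induction i)
      case 0 then show ?case by simp
    next
      case (Suc i) then show ?case using Phi_sub[OF that, of "j+i"] by auto
    qed
    have Phi_mono: "\<Phi> k y \<subseteq> \<Phi> j y" if "y \<in> topspace Y" "j \<le> k" for j k y
      using Phi_mono0[OF that(1), of j "k - j"] that(2) by simp
    define idx where "idx = (\<lambda>y. LEAST n. e n = y)"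
    have idx: "e (idx y) = y" if "y \<in> topspace Y" for y
    proof -
      have "\<exists>n. e n = y" using er that by (metis rangeE)
      then show ?thesis unfolding idx_def by (rule LeastI_ex)
    qed
    define f where "f = (\<lambda>y. x (idx y))"
    have fin: "f y \<in> \<Phi> k y" if y: "y \<in> topspace Y" for y k
    proof -
      let ?n = "idx y"
      have ee: "\<Phi> (Suc ?n) y = {f y}" using Phi_e[of ?n] idx[OF y] unfolding f_def by simp
      show ?thesis
      proof (cases "k \<le> Suc ?n")
        case True then show ?thesis using Phi_mono[OF y True] ee by blast
      next
        case False
        then have "\<Phi> k y \<subseteq> {f y}" using Phi_mono[OF y, of "Suc ?n" k] ee by simp
        then show ?thesis using Phi_ne[OF y, of k] by blast
      qed
    qed
    have fphi: "\<forall>y\<in>topspace Y. f y \<in> \<phi> y" using fin[where k=0] \<Phi>0 by simp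
    have ftop: "f y \<in> topspace X" if "y \<in> topspace Y" for y
      using fphi that a closedin_subset by blast
    have "continuous_map Y X f"
      unfolding continuous_map_def
    proof (intro conjI allI impI)
      show "f \<in> topspace Y \<rightarrow> topspace X" using ftop by blast
    next
      fix U assume U: "openin X U"
      show "openin Y {y \<in> topspace Y. f y \<in> U}"
      proof (subst openin_subopen, intro ballI)
        fix y1 assume y1: "y1 \<in> {y \<in> topspace Y. f y \<in> U}"
        let ?n = "idx (fst (y1, y1))"
        have y1t: "y1 \<in> topspace Y" and fy1: "f y1 \<in> U" using y1 by auto
        have "x (idx y1) \<in> U" using fy1 unfolding f_def .
        then obtain T where T: "openin Y T" "e (idx y1) \<in> T" "\<forall>y\<in>T. \<Phi> (Suc (idx y1)) y \<subseteq> U"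
          using Phi_usc[OF U] by blast
        have "T \<subseteq> {y \<in> topspace Y. f y \<in> U}"
        proof
          fix y assume yT: "y \<in> T"
          have yt: "y \<in> topspace Y" using T(1) yT openin_subset by blast
          then show "y \<in> {y \<in> topspace Y. f y \<in> U}" using fin[OF yt, of "Suc (idx y1)"] T(3) yT by blast
        qed
        then show "\<exists>T. openin Y T \<and> y1 \<in> T \<and> T \<subseteq> {y \<in> topspace Y. f y \<in> U}"
          using T idx[OF y1t] by metis
      qed
    qed
    then show ?thesis using fphi by blast
  qed
qed

end
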